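(* For every $\varphi\in B(H_1\otimes\dots\otimes H_n)$ and every $\zeta\in\Gamma(H_1,\dots,H_n)$ we have $\|S_\varphi(\zeta)\|_{op}\le\|\varphi\|\,\|\zeta\|_{2,\wedge}$.
   Context: Inner products are linear in the first variable. For a Hilbert space $K$, $K^d$ is its dual Hilbert space and $x\mapsto x^d$, $x^d(y)=(y,x)$, the canonical anti-linear isometry $K\to K^d$. For Hilbert spaces $H_1,\dots,H_n$ ($n\ge2$) let $H=H_1\otimes\dots\otimes H_n$; we identify $H_i^d\otimes H_{i+1}^d$ with $(H_i\otimes H_{i+1})^d$, so its elements are $\eta^d$ with $\eta\in H_i\otimes H_{i+1}$. If $n$ is even, $\Gamma(H_1,\dots,H_n)=(H_1\otimes H_2)\odot(H_2^d\otimes H_3^d)\odot(H_3\otimes H_4)\odot\dots\odot(H_{n-1}\otimes H_n)$; if $n$ is odd, $\Gamma(H_1,\dots,H_n)=(H_1^d\otimes H_2^d)\odot(H_2\otimes H_3)\odot(H_3^d\otimes H_4^d)\odot\dots\odot(H_{n-1}\otimes H_n)$ (algebraic tensor products). For $\varphi\in B(H)$, $S_\varphi$ is the linear map on $\Gamma$ defined on elementary tensors as follows (vectors in inner products regarded in $H$ after reordering tensor factors): if $n$ is even and $\zeta=\xi_{1,2}\otimes\eta_{2,3}^d\otimes\xi_{3,4}\otimes\dots\otimes\eta^d_{n-2,n-1}\otimes\xi_{n-1,n}$, then $S_\varphi(\zeta)\in B(H_1^d,H_n)$ with $(S_\varphi(\zeta)x^d,y)=(\varphi(\xi_{1,2}\otimes\xi_{3,4}\otimes\dots\otimes\xi_{n-1,n}),\,x\otimes\eta_{2,3}\otimes\dots\otimes\eta_{n-2,n-1}\otimes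 y)$ for $x\in H_1$, $y\in H_n$; if $n$ is odd and $\zeta=\eta_{1,2}^d\otimes\xi_{2,3}\otimes\eta_{3,4}^d\otimes\dots\otimes\xi_{n-1,n}$, then $S_\varphi(\zeta)\in B(H_1,H_n)$ with $(S_\varphi(\zeta)x,y)=(\varphi(x\otimes\xi_{2,3}\otimes\dots\otimes\xi_{n-1,n}),\,\eta_{1,2}\otimes\eta_{3,4}\otimes\dots\otimes\eta_{n-2,n-1}\otimes y)$. $\|\cdot\|_{2,\wedge}$ is the projective tensor norm on $\Gamma$ where each factor $H_i\otimes H_{i+1}$ or $H_i^d\otimes H_{i+1}^d$ carries its Hilbert space norm. *)

theory Defs
  imports "HOL-Analysis.Analysis"
begin

text \<open>Concrete model: every (complex) Hilbert space is unitarily isomorphic to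
  l2(I) for some index set I.  H_i = l2(I i), with all index sets living in one
  (arbitrary) type 'a.  H = H_1 \<otimes> ... \<otimes> H_n = l2(PiE {1..n} I), and
  H_j \<otimes> H_(j+1) = l2(I j \<times> I (j+1)).\<close>

definition l2 :: "'i set \<Rightarrow> ('i \<Rightarrow> complex) set" where
  "l2 J = {f. (\<forall>x. x \<notin> J \<longrightarrow> f x = 0) \<and> (\<lambda>x. (cmod (f x))^2) summable_on UNIV}"

definition l2_inner :: "('i \<Rightarrow> complex) \<Rightarrow> ('i \<Rightarrow> complex) \<Rightarrow> complex" where
  "l2_inner f g = infsum (\<lambda>x. f x * cnj (g x)) UNIV"

definition l2_norm :: "('i \<Rightarrow> complex) \<Rightarrow> real" where
  "l2_norm f = sqrt (infsum (\<lambda>x. (cmod (f x))^2) UNIV)"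

definition bounded_op :: "'i set \<Rightarrow> 'j set \<Rightarrow> (('i \<Rightarrow> complex) \<Rightarrow> ('j \<Rightarrow> complex)) \<Rightarrow> bool" where
  "bounded_op J K T \<longleftrightarrow>
     (\<forall>f\<in>l2 J. T f \<in> l2 K) \<and>
     (\<forall>f\<in>l2 J. \<forall>g\<in>l2 J. \<forall>a b. T (\<lambda>x. a * f x + b * g x) = (\<lambda>y. a * T f y + b * T g y)) \<and>
     (\<exists>C. \<forall>f\<in>l2 J. l2_norm (T f) \<le> C * l2_norm f)"

definition op_norm :: "'i set \<Rightarrow> (('i \<Rightarrow> complex) \<Rightarrow> ('j \<Rightarrow> complex)) \<Rightarrow> real" where
  "op_norm J T = Sup {l2_norm (T f) | f. f \<in> l2 J \<and> l2_norm f \<le> 1}"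

definition Htot :: "nat \<Rightarrow> (nat \<Rightarrow> 'a set) \<Rightarrow> (nat \<Rightarrow> 'a) set" where
  "Htot n I = PiE {1..n} I"

definition delta :: "'i \<Rightarrow> 'i \<Rightarrow> complex" where
  "delta b = (\<lambda>a. if a = b then 1 else 0)"

text \<open>Factor j of Gamma (j = 1..n-1) is H_j \<otimes> H_(j+1) (non-dual) iff n - j is odd,
  and (H_j \<otimes> H_(j+1))^d (dual) iff n - j is even.  An elementary tensor of Gamma is
  given by coordinate vectors \<theta> j \<in> l2(I j \<times> I (j+1)): for a non-dual factor
  \<theta> j = \<xi>_(j,j+1); for a dual factor \<theta> j are the coordinates of \<eta>_(j,j+1)^d, i.e.
  \<theta> j = cnj \<circ> \<eta>_(j,j+1) (the identification l2^d = l2 via x^d \<mapsto> cnj \<circ> x).\<close>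

text \<open>The vector \<xi>_(..) \<otimes> ... in H (including x at position 1 when n is odd).\<close>
definition uvec :: "nat \<Rightarrow> (nat \<Rightarrow> ('a \<times> 'a \<Rightarrow> complex)) \<Rightarrow> ('a \<Rightarrow> complex) \<Rightarrow> (nat \<Rightarrow> 'a) \<Rightarrow> complex" where
  "uvec n \<theta> x = (\<lambda>g. if g \<in> extensional {1..n} then
      (\<Prod>j\<in>{j\<in>{1..<n}. odd (n - j)}. \<theta> j (g j, g (Suc j))) * (if even n then 1 else x (g 1))
      else 0)"

text \<open>The vector [x \<otimes>] \<eta>_(..) \<otimes> ... \<otimes> y in H (x at position 1 only when n is even).\<close>
definition wvec :: "nat \<Rightarrow> (nat \<Rightarrow> ('a \<times> 'a \<Rightarrow> complex)) \<Rightarrow> ('a \<Rightarrow> complex) \<Rightarrow> ('a \<Rightarrow> complex) \<Rightarrow> (nat \<Rightarrow> 'a) \<Rightarrow> complex" where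
  "wvec n \<theta> x y = (\<lambda>g. if g \<in> extensional {1..n} then
      (\<Prod>j\<in>{j\<in>{1..<n}. even (n - j)}. cnj (\<theta> j (g j, g (Suc j)))) * (if even n then x (g 1) else 1) * y (g n)
      else 0)"

text \<open>S_\<phi> of an elementary tensor, as an operator l2(I 1) \<rightarrow> l2(I n).
  n odd: domain H_1, (S x)(b) = (S x, e_b) = (\<phi>(x \<otimes> \<xi> ...), \<eta> ... \<otimes> e_b).
  n even: domain H_1^d, identified with l2(I 1) via x^d \<mapsto> z = cnj \<circ> x;
  (S z)(b) = (\<phi>(\<xi> ...), x \<otimes> \<eta> ... \<otimes> e_b) with x = cnj \<circ> z.\<close>
definition Selem :: "nat \<Rightarrow> (nat \<Rightarrow> 'a set) \<Rightarrow> (((nat \<Rightarrow> 'a) \<Rightarrow> complex) \<Rightarrow> ((nat \<Rightarrow> 'a) \<Rightarrow> complex))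
     \<Rightarrow> (nat \<Rightarrow> ('a \<times> 'a \<Rightarrow> complex)) \<Rightarrow> ('a \<Rightarrow> complex) \<Rightarrow> ('a \<Rightarrow> complex)" where
  "Selem n I \<phi> \<theta> z = (\<lambda>b. if b \<in> I n then
      (if even n then l2_inner (\<phi> (uvec n \<theta> z)) (wvec n \<theta> (cnj \<circ> z) (delta b))
       else l2_inner (\<phi> (uvec n \<theta> z)) (wvec n \<theta> z (delta b)))
      else 0)"

text \<open>Gamma realised (injectively) as functions on the product of the factor index sets.\<close>
definition gtensor :: "nat \<Rightarrow> (nat \<Rightarrow> ('a \<times> 'a \<Rightarrow> complex)) \<Rightarrow> (nat \<Rightarrow> 'a \<times> 'a) \<Rightarrow> complex" where
  "gtensor n \<theta> = (\<lambda>g. \<Prod>j\<in>{1..<n}. \<theta> j (g j))"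

definition valid_factors :: "nat \<Rightarrow> (nat \<Rightarrow> 'a set) \<Rightarrow> (nat \<Rightarrow> ('a \<times> 'a \<Rightarrow> complex)) \<Rightarrow> bool" where
  "valid_factors n I \<theta> \<longleftrightarrow> (\<forall>j\<in>{1..<n}. \<theta> j \<in> l2 (I j \<times> I (Suc j)))"

definition reps :: "nat \<Rightarrow> (nat \<Rightarrow> 'a set) \<Rightarrow> ((nat \<Rightarrow> 'a \<times> 'a) \<Rightarrow> complex)
     \<Rightarrow> (nat \<times> (nat \<Rightarrow> nat \<Rightarrow> ('a \<times> 'a \<Rightarrow> complex))) set" where
  "reps n I \<zeta> = {(m, \<Theta>). (\<forall>k<m. valid_factors n I (\<Theta> k)) \<and> \<zeta> = (\<lambda>g. \<Sum>k<m. gtensor n (\<Theta> k) g)}"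

definition Gamma :: "nat \<Rightarrow> (nat \<Rightarrow> 'a set) \<Rightarrow> ((nat \<Rightarrow> 'a \<times> 'a) \<Rightarrow> complex) set" where
  "Gamma n I = {\<zeta>. reps n I \<zeta> \<noteq> {}}"

definition proj_norm :: "nat \<Rightarrow> (nat \<Rightarrow> 'a set) \<Rightarrow> ((nat \<Rightarrow> 'a \<times> 'a) \<Rightarrow> complex) \<Rightarrow> real" where
  "proj_norm n I \<zeta> = Inf {\<Sum>k<m. \<Prod>j\<in>{1..<n}. l2_norm (\<Theta> k j) | m \<Theta>. (m, \<Theta>) \<in> reps n I \<zeta>}"

text \<open>S_\<phi> on Gamma: the linear extension (well defined on l2 inputs).\<close>
definition S_phi :: "nat \<Rightarrow> (nat \<Rightarrow> 'a set) \<Rightarrow> (((nat \<Rightarrow> 'a) \<Rightarrow> complex) \<Rightarrow> ((nat \<Rightarrow> 'a) \<Rightarrow> complex))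
     \<Rightarrow> ((nat \<Rightarrow> 'a \<times> 'a) \<Rightarrow> complex) \<Rightarrow> ('a \<Rightarrow> complex) \<Rightarrow> ('a \<Rightarrow> complex)" where
  "S_phi n I \<phi> \<zeta> = (SOME T. \<exists>m \<Theta>. (m, \<Theta>) \<in> reps n I \<zeta> \<and>
      T = (\<lambda>z b. \<Sum>k<m. Selem n I \<phi> (\<Theta> k) z b))"

end

theory Submission
  imports Defs
begin

lemma l2_sq_summable: "f \<in> l2 J \<Longrightarrow> (\<lambda>x. (cmod (f x))^2) summable_on UNIV"
  by (simp add: l2_def)

lemma l2_zero_out: "f \<in> l2 J \<Longrightarrow> x \<notin> J \<Longrightarrow> f x = 0"
  by (simp add: l2_def)

lemma l2_prod_abs_summable:
  assumes "f \<in> l2 J" "g \<in> l2 K"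
  shows "(\<lambda>x. norm (f x * g x)) summable_on UNIV"
proof (rule Infinite_Sum.abs_summable_on_comparison_test')
  show "(\<lambda>x. (cmod (f x))^2 + (cmod (g x))^2) summable_on UNIV"
    using assms by (intro summable_on_add l2_sq_summable)
  fix x
  have "cmod (f x) * cmod (g x) \<le> (cmod (f x))^2 + (cmod (g x))^2"
    using sum_squares_bound[of "cmod (f x)" "cmod (g x)"] mult_nonneg_nonneg[OF norm_ge_zero norm_ge_zero, of "f x" "g x"]
    by linarith
  then show "norm (f x * g x) \<le> (cmod (f x))^2 + (cmod (g x))^2"
    by (simp add: norm_mult)
qed

lemma l2_prod_summable:
  assumes "f \<in> l2 J" "g \<in> l2 K"
  shows "(\<lambda>x. f x * g x) summable_on UNIV"
  by (rule abs_summable_summable[OF l2_prod_abs_summable[OF assms]])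

lemma l2_cnj: "f \<in> l2 J \<Longrightarrow> (cnj \<circ> f) \<in> l2 J"
  by (simp add: l2_def)

lemma l2_cnj': "f \<in> l2 J \<Longrightarrow> (\<lambda>x. cnj (f x)) \<in> l2 J"
  by (simp add: l2_def)

lemma l2_inner_summable:
  assumes "f \<in> l2 J" "g \<in> l2 K"
  shows "(\<lambda>x. f x * cnj (g x)) summable_on UNIV"
  using l2_prod_summable[OF assms(1) l2_cnj'[OF assms(2)]] .

lemma l2_lincomb:
  assumes "f \<in> l2 J" "g \<in> l2 J"
  shows "(\<lambda>x. a * f x + b * g x) \<in> l2 J"
proof -
  have "(\<lambda>x. (cmod (a * f x + b * g x))^2) summable_on UNIV"
  proof (rule summable_on_comparison_test)
    show "(\<lambda>x. 2 * (cmod a)^2 * (cmod (f x))^2 + 2 * (cmod b)^2 * (cmod (g x))^2) summable_on UNIV"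
      using assms by (intro summable_on_add summable_on_cmult_right l2_sq_summable)
    fix x
    have t: "cmod (a * f x + b * g x) \<le> cmod a * cmod (f x) + cmod b * cmod (g x)"
      by (metis norm_mult norm_triangle_ineq)
    have "(cmod (a * f x + b * g x))^2 \<le> (cmod a * cmod (f x) + cmod b * cmod (g x))^2"
      by (rule power_mono[OF t]) simp
    also have "\<dots> \<le> 2 * (cmod a * cmod (f x))^2 + 2 * (cmod b * cmod (g x))^2"
      unfolding power2_sum using sum_squares_bound[of "cmod a * cmod (f x)" "cmod b * cmod (g x)"] by linarith
    also have "\<dots> = 2 * (cmod a)^2 * (cmod (f x))^2 + 2 * (cmod b)^2 * (cmod (g x))^2"
      by (simp add: power_mult_distrib)
    finally show "(cmod (a * f x + b * g x))^2 \<le> 2 * (cmod a)^2 * (cmod (f x))^2 + 2 * (cmod b)^2 * (cmod (g x))^2" .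
  qed simp
  then show ?thesis using assms by (auto simp: l2_def)
qed

lemma l2_zero: "(\<lambda>_. 0) \<in> l2 J"
  by (simp add: l2_def)

lemma l2_norm_nonneg: "l2_norm f \<ge> 0"
  by (simp add: l2_norm_def infsum_nonneg)

lemma l2_norm_sq: "(l2_norm f)^2 = infsum (\<lambda>x. (cmod (f x))^2) UNIV"
  unfolding l2_norm_def by (simp add: infsum_nonneg)

lemma finite_le_norm2:
  assumes "f \<in> l2 J" "finite F"
  shows "(\<Sum>x\<in>F. (cmod (f x))^2) \<le> (l2_norm f)^2"
  unfolding l2_norm_sq using assms
  by (intro finite_sum_le_infsum l2_sq_summable) auto

lemma norm2_le:
  assumes "\<And>F. finite F \<Longrightarrow> (\<Sum>x\<in>F. (cmod (f x))^2) \<le> C"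
  shows "(\<lambda>x. (cmod (f x))^2) summable_on UNIV" "(l2_norm f)^2 \<le> C"
proof -
  show s: "(\<lambda>x. (cmod (f x))^2) summable_on UNIV"
    by (rule nonneg_bdd_above_summable_on, simp, rule bdd_aboveI2[where M=C]) (use assms in auto)
  show "(l2_norm f)^2 \<le> C"
    unfolding l2_norm_sq by (rule infsum_le_finite_sums[OF s]) (use assms in auto)
qed

lemma L2_set_le_norm:
  assumes "f \<in> l2 J"
  shows "L2_set (\<lambda>x. cmod (f x)) F \<le> l2_norm f"
proof (cases "finite F")
  case True
  then have "(\<Sum>x\<in>F. (cmod (f x))^2) \<le> (l2_norm f)^2" using finite_le_norm2 assms by blast
  then have "sqrt (\<Sum>x\<in>F. (cmod (f x))^2) \<le> sqrt ((l2_norm f)^2)" by (rule real_sqrt_le_mono)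
  then show ?thesis unfolding L2_set_def using l2_norm_nonneg[of f] by simp
qed (simp add: l2_norm_nonneg)

lemma cauchy_schwarz:
  assumes "f \<in> l2 J" "g \<in> l2 K"
  shows "cmod (l2_inner f g) \<le> l2_norm f * l2_norm g"
proof -
  have as: "(\<lambda>x. norm (f x * cnj (g x))) summable_on UNIV"
    using l2_prod_abs_summable[OF assms(1) l2_cnj'[OF assms(2)]] .
  have "cmod (l2_inner f g) \<le> infsum (\<lambda>x. norm (f x * cnj (g x))) UNIV"
    unfolding l2_inner_def by (rule norm_infsum_bound[OF as])
  also have "\<dots> \<le> l2_norm f * l2_norm g"
  proof (rule infsum_le_finite_sums[OF as])
    fix F :: "'a set" assume "finite F"
    have "(\<Sum>x\<in>F. norm (f x * cnj (g x))) = (\<Sum>x\<in>F. \<bar>cmod (f x)\<bar> * \<bar>cmod (g x)\<bar>)"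
      by (simp add: norm_mult)
    also have "\<dots> \<le> L2_set (\<lambda>x. cmod (f x)) F * L2_set (\<lambda>x. cmod (g x)) F"
      by (rule L2_set_mult_ineq)
    also have "\<dots> \<le> l2_norm f * l2_norm g"
      by (intro mult_mono L2_set_le_norm[OF assms(1)] L2_set_le_norm[OF assms(2)] l2_norm_nonneg L2_set_nonneg)
    finally show "(\<Sum>x\<in>F. norm (f x * cnj (g x))) \<le> l2_norm f * l2_norm g" .
  qed
  finally show ?thesis .
qed

lemma l2_norm_scale: "l2_norm (\<lambda>x. c * f x) = cmod c * l2_norm f"
proof -
  have "infsum (\<lambda>x. (cmod (c * f x))^2) UNIV = (cmod c)^2 * infsum (\<lambda>x. (cmod (f x))^2) UNIV"
    by (simp add: norm_mult power_mult_distrib infsum_cmult_right')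
  then show ?thesis unfolding l2_norm_def by (simp add: real_sqrt_mult)
qed

lemma l2_norm_zero_imp:
  assumes "f \<in> l2 J" "l2_norm f = 0"
  shows "f = (\<lambda>_. 0)"
proof
  fix x
  have "(\<Sum>y\<in>{x}. (cmod (f y))^2) \<le> (l2_norm f)^2" by (rule finite_le_norm2[OF assms(1)]) simp
  then show "f x = 0" using assms(2) by simp
qed

lemma bop_zero:
  assumes "bounded_op J K T"
  shows "T (\<lambda>_. 0) = (\<lambda>_. 0)"
proof -
  have lin: "\<forall>f\<in>l2 J. \<forall>g\<in>l2 J. \<forall>a b. T (\<lambda>x. a * f x + b * g x) = (\<lambda>y. a * T f y + b * T g y)"
    using assms unfolding bounded_op_def by blast
  show ?thesis using lin[rule_format, OF l2_zero l2_zero, of 0 0] by simp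
qed

lemma bop_scale:
  assumes "bounded_op J K T" "f \<in> l2 J"
  shows "T (\<lambda>x. c * f x) = (\<lambda>y. c * T f y)"
proof -
  have lin: "\<forall>f\<in>l2 J. \<forall>g\<in>l2 J. \<forall>a b. T (\<lambda>x. a * f x + b * g x) = (\<lambda>y. a * T f y + b * T g y)"
    using assms unfolding bounded_op_def by blast
  show ?thesis using lin[rule_format, OF assms(2) assms(2), of c 0] by simp
qed

lemma bop_bdd:
  assumes "bounded_op J K T"
  shows "bdd_above {l2_norm (T f) | f. f \<in> l2 J \<and> l2_norm f \<le> 1}"
proof -
  obtain C where C: "\<forall>f\<in>l2 J. l2_norm (T f) \<le> C * l2_norm f"
    using assms unfolding bounded_op_def by blast
  show ?thesis
  proof (rule bdd_aboveI)
    fix v assume "v \<in> {l2_norm (T f) | f. f \<in> l2 J \<and> l2_norm f \<le> 1}"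
    then obtain f where v: "v = l2_norm (T f)" and "f \<in> l2 J \<and> l2_norm f \<le> 1" by blast
    then have "l2_norm (T f) \<le> C * l2_norm f" "l2_norm f \<le> 1" using C by auto
    moreover have "C * l2_norm f \<le> \<bar>C\<bar> * l2_norm f"
      by (rule mult_right_mono) (simp_all add: l2_norm_nonneg)
    moreover have "\<bar>C\<bar> * l2_norm f \<le> \<bar>C\<bar>"
      using mult_left_mono[OF \<open>l2_norm f \<le> 1\<close>, of "\<bar>C\<bar>"] by simp
    ultimately show "v \<le> \<bar>C\<bar>" using v by linarith
  qed
qed

lemma op_norm_nonneg:
  assumes "bounded_op J K T"
  shows "op_norm J T \<ge> 0"
proof -
  define X where "X = {l2_norm (T f) | f. f \<in> l2 J \<and> l2_norm f \<le> 1}"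
  have bdd: "bdd_above X" using bop_bdd[OF assms] unfolding X_def .
  have "l2_norm (T (\<lambda>_. 0)) = 0" using bop_zero[OF assms] by (simp add: l2_norm_def)
  moreover have "(\<lambda>_. 0) \<in> l2 J \<and> l2_norm (\<lambda>_. 0::complex) \<le> 1" by (simp add: l2_zero l2_norm_def)
  then have "l2_norm (T (\<lambda>_. 0)) \<in> X" unfolding X_def by blast
  ultimately have mem: "0 \<in> X" by simp
  have "0 \<le> Sup X" by (rule cSup_upper[OF mem bdd])
  then show ?thesis by (simp add: op_norm_def X_def)
qed

lemma op_norm_bound:
  assumes "bounded_op J K T" "f \<in> l2 J"
  shows "l2_norm (T f) \<le> op_norm J T * l2_norm f"
proof (cases "l2_norm f = 0")
  case True
  then have "f = (\<lambda>_. 0)" using l2_norm_zero_imp assms(2) by blast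
  then show ?thesis using bop_zero[OF assms(1)] True by (simp add: l2_norm_def)
next
  case False
  define X where "X = {l2_norm (T f) | f. f \<in> l2 J \<and> l2_norm f \<le> 1}"
  have bdd: "bdd_above X" using bop_bdd[OF assms(1)] unfolding X_def .
  have pos: "l2_norm f > 0" using False l2_norm_nonneg[of f] by linarith
  define c where "c = complex_of_real (1 / l2_norm f)"
  have h: "(\<lambda>x. c * f x) \<in> l2 J" using l2_lincomb[OF assms(2) assms(2), of c 0] by simp
  have nh: "l2_norm (\<lambda>x. c * f x) = 1" unfolding l2_norm_scale c_def using pos by (simp add: norm_divide)
  have mem: "l2_norm (T (\<lambda>x. c * f x)) \<in> X"
    unfolding X_def mem_Collect_eq by (rule exI[where x="\<lambda>x. c * f x"]) (use h nh in simp)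
  have "l2_norm (T (\<lambda>x. c * f x)) \<le> Sup X" by (rule cSup_upper[OF mem bdd])
  moreover have "op_norm J T = Sup X" by (simp add: op_norm_def X_def)
  moreover have "l2_norm (T (\<lambda>x. c * f x)) = cmod c * l2_norm (T f)"
    unfolding bop_scale[OF assms] by (rule l2_norm_scale)
  moreover have "cmod c = 1 / l2_norm f" unfolding c_def using pos by (simp add: norm_divide)
  ultimately have "l2_norm (T f) / l2_norm f \<le> op_norm J T" by simp
  then show ?thesis using pos by (simp add: divide_le_eq mult.commute)
qed

lemma bilin_lin_sum:
  fixes B :: "('g \<Rightarrow> complex) \<Rightarrow> ('h \<Rightarrow> complex) \<Rightarrow> complex" and m :: nat
  assumes P0: "(\<lambda>_. 0) \<in> P"
  and Pc: "\<And>u1 u2 a b. u1 \<in> P \<Longrightarrow> u2 \<in> P \<Longrightarrow> (\<lambda>x. a * u1 x + b * u2 x) \<in> P"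
  and B1: "\<And>u1 u2 v a b. u1 \<in> P \<Longrightarrow> u2 \<in> P \<Longrightarrow> v \<in> Q \<Longrightarrow> B (\<lambda>x. a * u1 x + b * u2 x) v = a * B u1 v + b * B u2 v"
  and v: "v \<in> Q"
  and u: "\<forall>k<m. u k \<in> P"
  shows "(\<lambda>x. \<Sum>k<m. c k * u k x) \<in> P \<and> B (\<lambda>x. \<Sum>k<m. c k * u k x) v = (\<Sum>k<m. c k * B (u k) v)"
  using u
proof (induction m)
  case 0
  have "B (\<lambda>x. 0 * (\<lambda>_. 0) x + 0 * (\<lambda>_. 0) x) v = 0 * B (\<lambda>_. 0) v + 0 * B (\<lambda>_. 0) v"
    by (rule B1[OF P0 P0 v])
  then show ?case using P0 by simp
next
  case (Suc m)
  then have IH: "(\<lambda>x. \<Sum>k<m. c k * u k x) \<in> P" "B (\<lambda>x. \<Sum>k<m. c k * u k x) v = (\<Sum>k<m. c k * B (u k) v)"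
    and um: "u m \<in> P" by auto
  have eq: "(\<lambda>x. \<Sum>k<Suc m. c k * u k x) = (\<lambda>x. 1 * (\<lambda>x. \<Sum>k<m. c k * u k x) x + c m * u m x)"
    by simp
  show ?case unfolding eq using Pc[OF IH(1) um, of 1 "c m"] B1[OF IH(1) um v, of 1 "c m"] IH(2) by simp
qed

lemma bilin_sum_zero:
  fixes B :: "('g \<Rightarrow> complex) \<Rightarrow> ('h \<Rightarrow> complex) \<Rightarrow> complex" and m :: nat
  assumes P0: "(\<lambda>_. 0) \<in> P"
  and Pc: "\<And>u1 u2 a b. u1 \<in> P \<Longrightarrow> u2 \<in> P \<Longrightarrow> (\<lambda>x. a * u1 x + b * u2 x) \<in> P"
  and Qc: "\<And>v1 v2 a b. v1 \<in> Q \<Longrightarrow> v2 \<in> Q \<Longrightarrow> (\<lambda>x. a * v1 x + b * v2 x) \<in> Q"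
  and B1: "\<And>u1 u2 v a b. u1 \<in> P \<Longrightarrow> u2 \<in> P \<Longrightarrow> v \<in> Q \<Longrightarrow> B (\<lambda>x. a * u1 x + b * u2 x) v = a * B u1 v + b * B u2 v"
  and B2: "\<And>u v1 v2 a b. u \<in> P \<Longrightarrow> v1 \<in> Q \<Longrightarrow> v2 \<in> Q \<Longrightarrow> B u (\<lambda>x. a * v1 x + b * v2 x) = a * B u v1 + b * B u v2"
  shows "(\<forall>k<m. u k \<in> P) \<longrightarrow> (\<forall>k<m. v k \<in> Q) \<longrightarrow> (\<forall>g h. (\<Sum>k<m. u k g * v k h) = 0) \<longrightarrow> (\<Sum>k<m. B (u k) (v k)) = 0"
proof (induction m arbitrary: v)
  case 0
  then show ?case by simp
next
  case (Suc m)
  show ?case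
  proof (intro impI)
    assume uP: "\<forall>k<Suc m. u k \<in> P" and vQ: "\<forall>k<Suc m. v k \<in> Q"
      and H: "\<forall>g h. (\<Sum>k<Suc m. u k g * v k h) = 0"
    have um: "u m \<in> P" and vm: "v m \<in> Q" using uP vQ by auto
    show "(\<Sum>k<Suc m. B (u k) (v k)) = 0"
    proof (cases "\<forall>h. v m h = 0")
      case True
      then have vm0: "v m = (\<lambda>_. 0)" by auto
      have "(\<Sum>k<m. u k g * v k h) = 0" for g h using H[rule_format, of g h] True by simp
      then have s: "(\<Sum>k<m. B (u k) (v k)) = 0" using Suc.IH[of v] uP vQ by auto
      have "B (u m) (\<lambda>x. 0 * v m x + 0 * v m x) = 0 * B (u m) (v m) + 0 * B (u m) (v m)"
        by (rule B2[OF um vm vm])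
      then have "B (u m) (v m) = 0" using vm0 by simp
      then show ?thesis using s by simp
    next
      case False
      then obtain h0 where h0: "v m h0 \<noteq> 0" by auto
      define d where "d = v m h0"
      define c where "c k = - (v k h0 / d)" for k
      define v' where "v' k = (\<lambda>h. 1 * v k h + c k * v m h)" for k
      have umeq: "u m = (\<lambda>g. \<Sum>k<m. c k * u k g)"
      proof
        fix g
        have "(\<Sum>k<m. u k g * v k h0) + u m g * d = 0" using H[rule_format, of g h0] by (simp add: d_def)
        then have "u m g = - (\<Sum>k<m. u k g * v k h0) / d" using h0 unfolding d_def
          by (simp add: field_simps add_eq_0_iff)
        also have "\<dots> = (\<Sum>k<m. c k * u k g)"
          unfolding c_def by (simp add: sum_divide_distrib sum_negf[symmetric] algebra_simps)
        finally show "u m g = (\<Sum>k<m. c k * u k g)" .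
      qed
      have v'Q: "\<forall>k<m. v' k \<in> Q"
      proof (intro allI impI)
        fix k assume "k < m"
        then have "v k \<in> Q" using vQ by simp
        then show "v' k \<in> Q" unfolding v'_def by (rule Qc[OF _ vm])
      qed
      have H': "\<forall>g h. (\<Sum>k<m. u k g * v' k h) = 0"
      proof (intro allI)
        fix g h
        have "(\<Sum>k<m. u k g * v' k h) = (\<Sum>k<m. u k g * v k h + (c k * u k g) * v m h)"
          unfolding v'_def by (simp add: algebra_simps)
        also have "\<dots> = (\<Sum>k<m. u k g * v k h) + (\<Sum>k<m. c k * u k g) * v m h"
          by (simp add: sum.distrib sum_distrib_right)
        also have "\<dots> = (\<Sum>k<Suc m. u k g * v k h)"
          by (simp add: umeq)
        finally show "(\<Sum>k<m. u k g * v' k h) = 0" using H by simp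
      qed
      have uPm: "\<forall>k<m. u k \<in> P" using uP by simp
      have z: "(\<Sum>k<m. B (u k) (v' k)) = 0"
        by (rule Suc.IH[of v', THEN mp, THEN mp, THEN mp, OF uPm v'Q H'])
      have eqk: "B (u k) (v' k) = B (u k) (v k) + c k * B (u k) (v m)" if "k < m" for k
      proof -
        have "u k \<in> P" "v k \<in> Q" using uP vQ that by auto
        then show ?thesis unfolding v'_def using B2[of "u k" "v k" "v m" 1 "c k"] vm by simp
      qed
      have "(\<Sum>k<m. B (u k) (v' k)) = (\<Sum>k<m. B (u k) (v k) + c k * B (u k) (v m))"
        by (rule sum.cong) (simp_all add: eqk)
      then have "(\<Sum>k<m. B (u k) (v' k)) = (\<Sum>k<m. B (u k) (v k)) + (\<Sum>k<m. c k * B (u k) (v m))"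
        by (simp add: sum.distrib)
      moreover have "B (\<lambda>x. \<Sum>k<m. c k * u k x) (v m) = (\<Sum>k<m. c k * B (u k) (v m))"
        using bilin_lin_sum[where P=P and Q=Q and B=B and c=c, OF P0 Pc B1 vm uPm] by (rule conjunct2)
      then have "B (u m) (v m) = (\<Sum>k<m. c k * B (u k) (v m))"
        by (simp only: umeq)
      ultimately show ?thesis using z by simp
    qed
  qed
qed

lemma bilin_sum_eq:
  fixes B :: "('g \<Rightarrow> complex) \<Rightarrow> ('h \<Rightarrow> complex) \<Rightarrow> complex" and m m' :: nat
  assumes P0: "(\<lambda>_. 0) \<in> P"
  and Pc: "\<And>u1 u2 a b. u1 \<in> P \<Longrightarrow> u2 \<in> P \<Longrightarrow> (\<lambda>x. a * u1 x + b * u2 x) \<in> P"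
  and Qc: "\<And>v1 v2 a b. v1 \<in> Q \<Longrightarrow> v2 \<in> Q \<Longrightarrow> (\<lambda>x. a * v1 x + b * v2 x) \<in> Q"
  and B1: "\<And>u1 u2 v a b. u1 \<in> P \<Longrightarrow> u2 \<in> P \<Longrightarrow> v \<in> Q \<Longrightarrow> B (\<lambda>x. a * u1 x + b * u2 x) v = a * B u1 v + b * B u2 v"
  and B2: "\<And>u v1 v2 a b. u \<in> P \<Longrightarrow> v1 \<in> Q \<Longrightarrow> v2 \<in> Q \<Longrightarrow> B u (\<lambda>x. a * v1 x + b * v2 x) = a * B u v1 + b * B u v2"
  and uP: "\<forall>k<m. u k \<in> P" and vQ: "\<forall>k<m. v k \<in> Q"
  and uP': "\<forall>k<m'. u' k \<in> P" and vQ': "\<forall>k<m'. v' k \<in> Q"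
  and H: "\<And>g h. (\<Sum>k<m. u k g * v k h) = (\<Sum>k<m'. u' k g * v' k h)"
  shows "(\<Sum>k<m. B (u k) (v k)) = (\<Sum>k<m'. B (u' k) (v' k))"
proof -
  define U where "U k = (if k < m then u k else u' (k - m))" for k
  define V where "V k = (if k < m then v k else (\<lambda>x. (-1) * v' (k - m) x + 0 * v' (k - m) x))" for k
  have UP: "\<forall>k<m+m'. U k \<in> P" unfolding U_def using uP uP' by auto
  have VQ: "\<forall>k<m+m'. V k \<in> Q"
  proof (intro allI impI)
    fix k assume k: "k < m + m'"
    show "V k \<in> Q"
    proof (cases "k < m")
      case True then show ?thesis unfolding V_def using vQ by simp
    next
      case False
      then have "k - m < m'" using k by arith
      then have vk: "v' (k - m) \<in> Q" using vQ' by blast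
      have "(\<lambda>x. (-1) * v' (k - m) x + 0 * v' (k - m) x) \<in> Q" by (rule Qc[OF vk vk])
      then show ?thesis unfolding V_def using False by simp
    qed
  qed
  have split: "(\<Sum>k<m+m'. f k) = (\<Sum>k<m. f k) + (\<Sum>k<m'. f (m + k))" for f :: "nat \<Rightarrow> complex"
    by (induction m') auto
  have s1: "(\<Sum>k<m. U k g * V k h) = (\<Sum>k<m. u k g * v k h)" for g h
    by (rule sum.cong) (simp_all add: U_def V_def)
  have s2: "(\<Sum>k<m'. U (m+k) g * V (m+k) h) = - (\<Sum>k<m'. u' k g * v' k h)" for g h
    by (simp add: U_def V_def sum_negf)
  have HZ: "\<forall>g h. (\<Sum>k<m+m'. U k g * V k h) = 0"
    unfolding split s1 s2 using H by simp
  have "(\<Sum>k<m+m'. B (U k) (V k)) = 0"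
  proof -
    have Z: "(\<forall>k<m+m'. U k \<in> P) \<longrightarrow> (\<forall>k<m+m'. V k \<in> Q) \<longrightarrow> (\<forall>g h. (\<Sum>k<m+m'. U k g * V k h) = 0) \<longrightarrow> (\<Sum>k<m+m'. B (U k) (V k)) = 0"
      by (rule bilin_sum_zero[where P=P and Q=Q and B=B, OF P0 Pc Qc B1 B2])
    show ?thesis using Z UP VQ HZ by blast
  qed
  moreover have "B (u' k) (\<lambda>x. (-1) * v' k x + 0 * v' k x) = - B (u' k) (v' k)" if "k < m'" for k
    using B2[of "u' k" "v' k" "v' k" "-1" 0] that uP' vQ' by simp
  moreover have "(\<Sum>k<m. B (U k) (V k)) = (\<Sum>k<m. B (u k) (v k))"
    by (rule sum.cong) (simp_all add: U_def V_def)
  ultimately show ?thesis unfolding split by (simp add: U_def V_def sum_negf)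
qed

lemma sum_prod_le:
  fixes a :: "'j \<Rightarrow> 'k \<Rightarrow> real" and key :: "'j \<Rightarrow> 'g \<Rightarrow> 'k"
  assumes finJ: "finite J" and finG: "finite G" and nn: "\<And>j t. j \<in> J \<Longrightarrow> a j t \<ge> 0"
    and bnd: "\<And>j T. j \<in> J \<Longrightarrow> finite T \<Longrightarrow> sum (a j) T \<le> A j"
    and inj: "\<And>g1 g2. g1 \<in> G \<Longrightarrow> g2 \<in> G \<Longrightarrow> (\<forall>j\<in>J. key j g1 = key j g2) \<Longrightarrow> g1 = g2"
  shows "(\<Sum>g\<in>G. \<Prod>j\<in>J. a j (key j g)) \<le> (\<Prod>j\<in>J. A j)"
proof -
  define \<Psi> where "\<Psi> g = restrict (\<lambda>j. key j g) J" for g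
  have injP: "inj_on \<Psi> G"
  proof (rule inj_onI)
    fix g1 g2 assume g: "g1 \<in> G" "g2 \<in> G" "\<Psi> g1 = \<Psi> g2"
    have "\<forall>j\<in>J. key j g1 = key j g2"
    proof
      fix j assume "j \<in> J"
      then have "\<Psi> g1 j = key j g1" "\<Psi> g2 j = key j g2" by (simp_all add: \<Psi>_def)
      then show "key j g1 = key j g2" using g(3) by simp
    qed
    then show "g1 = g2" using inj g by blast
  qed
  have "(\<Sum>g\<in>G. \<Prod>j\<in>J. a j (key j g)) = (\<Sum>g\<in>G. \<Prod>j\<in>J. a j (\<Psi> g j))"
    by (intro sum.cong prod.cong) (auto simp: \<Psi>_def)
  also have "\<dots> = (\<Sum>p\<in>\<Psi> ` G. \<Prod>j\<in>J. a j (p j))"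
    by (simp add: sum.reindex[OF injP] o_def)
  also have "\<dots> \<le> (\<Sum>p\<in>PiE J (\<lambda>j. key j ` G). \<Prod>j\<in>J. a j (p j))"
  proof (rule sum_mono2)
    show "finite (PiE J (\<lambda>j. key j ` G))" using finJ finG by (simp add: finite_PiE)
    show "\<Psi> ` G \<subseteq> PiE J (\<lambda>j. key j ` G)" using finG by (auto simp: \<Psi>_def)
    show "0 \<le> (\<Prod>j\<in>J. a j (p j))" for p by (rule prod_nonneg) (simp add: nn)
  qed
  also have "\<dots> = (\<Prod>j\<in>J. \<Sum>t\<in>key j ` G. a j t)"
    by (rule prod_sum_PiE[symmetric]) (use finJ finG in auto)
  also have "\<dots> \<le> (\<Prod>j\<in>J. A j)"
    by (rule prod_mono) (use finG in \<open>auto intro: sum_nonneg nn bnd\<close>)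
  finally show ?thesis .
qed

lemma tensor_l2:
  fixes F :: "(nat \<Rightarrow> 'a) \<Rightarrow> complex" and f :: "nat \<Rightarrow> 'a \<times> 'a \<Rightarrow> complex"
    and key :: "nat \<Rightarrow> (nat \<Rightarrow> 'a) \<Rightarrow> 'a \<times> 'a" and I :: "nat \<Rightarrow> 'a set"
  assumes finJ: "finite J"
  and Fdef: "\<And>g. F g = (if g \<in> extensional {1..n} then \<Prod>j\<in>J. f j (key j g) else 0)"
  and fb: "\<And>j T. j \<in> J \<Longrightarrow> finite T \<Longrightarrow> (\<Sum>t\<in>T. (cmod (f j t))^2) \<le> A j"
  and inj: "\<And>g1 g2. g1 \<in> extensional {1..n} \<Longrightarrow> g2 \<in> extensional {1..n} \<Longrightarrow> (\<forall>j\<in>J. key j g1 = key j g2) \<Longrightarrow> g1 = g2"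
  and supp: "\<And>g. g \<in> extensional {1..n} \<Longrightarrow> g \<notin> Htot n I \<Longrightarrow> \<exists>j\<in>J. f j (key j g) = 0"
  shows "F \<in> l2 (Htot n I) \<and> (l2_norm F)^2 \<le> (\<Prod>j\<in>J. A j)"
proof -
  let ?E = "extensional {1..n}"
  have bound: "(\<Sum>g\<in>G. (cmod (F g))^2) \<le> (\<Prod>j\<in>J. A j)" if fG: "finite G" for G
  proof -
    have "(\<Sum>g\<in>G. (cmod (F g))^2) = (\<Sum>g\<in>G \<inter> ?E. (cmod (F g))^2)"
      by (rule sum.mono_neutral_right) (auto simp: Fdef fG)
    also have "\<dots> = (\<Sum>g\<in>G \<inter> ?E. \<Prod>j\<in>J. (cmod (f j (key j g)))^2)"
      by (rule sum.cong) (auto simp: Fdef prod_norm[symmetric] prod_power_distrib)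
    also have "\<dots> \<le> (\<Prod>j\<in>J. A j)"
    proof (rule sum_prod_le[where a="\<lambda>j t. (cmod (f j t))^2" and key=key])
      show "finite (G \<inter> ?E)" using fG by simp
      show "finite J" by (rule finJ)
      show "0 \<le> (cmod (f j t))^2" for j t by simp
      show "(\<Sum>t\<in>T. (cmod (f j t))^2) \<le> A j" if "j \<in> J" "finite T" for j T by (rule fb[OF that])
      show "g1 = g2" if "g1 \<in> G \<inter> ?E" "g2 \<in> G \<inter> ?E" "\<forall>j\<in>J. key j g1 = key j g2" for g1 g2
        using inj that by blast
    qed
    finally show ?thesis .
  qed
  note nb = norm2_le[of F, OF bound]
  have z: "F g = 0" if "g \<notin> Htot n I" for g
  proof (cases "g \<in> ?E")
    case True
    from supp[OF True that] obtain j where "j \<in> J" "f j (key j g) = 0" by blast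
    then have "\<exists>j\<in>J. f j (key j g) = 0" by blast
    then have "(\<Prod>j\<in>J. f j (key j g)) = 0" by (rule prod_zero[OF finJ])
    then show ?thesis using True by (simp add: Fdef)
  qed (simp add: Fdef)
  have "F \<in> l2 (Htot n I)" unfolding l2_def mem_Collect_eq using z nb(1) by blast
  then show ?thesis using nb(2) by blast
qed

definition diag :: "('a \<Rightarrow> complex) \<Rightarrow> 'a \<times> 'a \<Rightarrow> complex" where
  "diag x t = (if fst t = snd t then x (fst t) else 0)"

lemma diag_bound:
  assumes "x \<in> l2 J" "finite T"
  shows "(\<Sum>t\<in>T. (cmod (diag x t))^2) \<le> (l2_norm x)^2"
proof -
  let ?D = "{t \<in> T. fst t = snd t}"
  have "(\<Sum>t\<in>T. (cmod (diag x t))^2) = (\<Sum>t\<in>?D. (cmod (diag x t))^2)"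
    by (rule sum.mono_neutral_right) (auto simp: diag_def assms(2))
  also have "\<dots> = (\<Sum>t\<in>?D. (cmod (x (fst t)))^2)"
    by (rule sum.cong) (auto simp: diag_def)
  also have "\<dots> = (\<Sum>s\<in>fst ` ?D. (cmod (x s))^2)"
  proof -
    have inj: "inj_on fst ?D" by (rule inj_onI) (auto simp: prod_eq_iff)
    show ?thesis by (simp only: sum.reindex[OF inj] o_def)
  qed
  also have "\<dots> \<le> (l2_norm x)^2"
    by (rule finite_le_norm2[OF assms(1)]) (use assms(2) in simp)
  finally show ?thesis .
qed

lemma diag_apply: "diag x (s, s) = x s"
  by (simp add: diag_def)

lemma cov_u:
  fixes n i :: nat
  assumes "2 \<le> n" "1 \<le> i" "i \<le> n"
  shows "\<exists>j. ((1 \<le> j \<and> j < n \<and> odd (n - j)) \<or> (odd n \<and> j = 0)) \<and>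
    ((j = 0 \<and> i = 1) \<or> (1 \<le> j \<and> j < n \<and> (i = j \<or> i = Suc j)))"
proof (cases "odd n \<and> i = 1")
  case True then show ?thesis by (intro exI[of _ 0]) simp
next
  case False
  show ?thesis
  proof (cases "odd (n - i)")
    case True
    have "i < n" using True assms(3) by (cases "i = n") auto
    then show ?thesis using True assms by (intro exI[of _ i]) simp
  next
    case F2: False
    have "i \<noteq> 1" using False F2 assms by (cases "i = 1") auto
    have "n - (i - 1) = Suc (n - i)" using \<open>i \<noteq> 1\<close> assms by arith
    then have "odd (n - (i - 1))" using F2 by simp
    moreover have "1 \<le> i - 1" "i - 1 < n" using \<open>i \<noteq> 1\<close> assms by auto
    ultimately show ?thesis using \<open>i \<noteq> 1\<close> assms by (intro exI[of _ "i - 1"]) simp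
  qed
qed

lemma cov_w:
  fixes n i :: nat
  assumes "2 \<le> n" "1 \<le> i" "i \<le> n"
  shows "\<exists>j. ((1 \<le> j \<and> j < n \<and> even (n - j)) \<or> (even n \<and> j = 0) \<or> j = n) \<and>
    ((j = 0 \<and> i = 1) \<or> (j = n \<and> i = n) \<or> (1 \<le> j \<and> j < n \<and> (i = j \<or> i = Suc j)))"
proof (cases "i = n")
  case True then show ?thesis by (intro exI[of _ n]) simp
next
  case False
  then have "i < n" using assms by simp
  show ?thesis
  proof (cases "even n \<and> i = 1")
    case True then show ?thesis by (intro exI[of _ 0]) simp
  next
    case F1: False
    show ?thesis
    proof (cases "even (n - i)")
      case True
      then show ?thesis using \<open>i < n\<close> assms by (intro exI[of _ i]) simp
    next
      case F2: False
      have "i \<noteq> 1" using F1 F2 assms by (cases "i = 1") auto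
      have "n - (i - 1) = Suc (n - i)" using \<open>i \<noteq> 1\<close> assms by arith
      then have "even (n - (i - 1))" using F2 by simp
      moreover have "1 \<le> i - 1" "i - 1 < n" using \<open>i \<noteq> 1\<close> assms by auto
      ultimately show ?thesis using \<open>i \<noteq> 1\<close> assms by (intro exI[of _ "i - 1"]) simp
    qed
  qed
qed

definition kf :: "nat \<Rightarrow> nat \<Rightarrow> (nat \<Rightarrow> 'a) \<Rightarrow> 'a \<times> 'a" where
  "kf n j g = (if j = 0 then (g 1, g 1) else if j = n then (g n, g n) else (g j, g (Suc j)))"

definition ND :: "nat \<Rightarrow> nat set" where "ND n = {j\<in>{1..<n}. odd (n - j)}"
definition DD :: "nat \<Rightarrow> nat set" where "DD n = {j\<in>{1..<n}. even (n - j)}"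

lemma ND_props: "finite (ND n)" "0 \<notin> ND n" "n \<notin> ND n" "j \<in> ND n \<Longrightarrow> 1 \<le> j \<and> j < n"
  by (auto simp: ND_def)

lemma DD_props: "finite (DD n)" "0 \<notin> DD n" "n \<notin> DD n" "j \<in> DD n \<Longrightarrow> 1 \<le> j \<and> j < n"
  by (auto simp: DD_def)

lemma kf_mid: "1 \<le> j \<Longrightarrow> j < n \<Longrightarrow> kf n j g = (g j, g (Suc j))"
  by (simp add: kf_def)

lemma vf_l2: "valid_factors n I \<theta> \<Longrightarrow> 1 \<le> j \<Longrightarrow> j < n \<Longrightarrow> \<theta> j \<in> l2 (I j \<times> I (Suc j))"
  by (simp add: valid_factors_def)

lemma not_Htot:
  assumes "g \<in> extensional {1..n}" "g \<notin> Htot n I"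
  obtains i where "1 \<le> i" "i \<le> n" "g i \<notin> I i"
  using assms by (auto simp: Htot_def PiE_iff)

lemma uvec_l2:
  assumes n2: "2 \<le> n" and vf: "valid_factors n I \<theta>" and z: "z \<in> l2 (I 1)"
  shows "uvec n \<theta> z \<in> l2 (Htot n I) \<and>
    (l2_norm (uvec n \<theta> z))^2 \<le> (\<Prod>j\<in>ND n. (l2_norm (\<theta> j))^2) * (if even n then 1 else (l2_norm z)^2)"
proof -
  define J where "J = ND n \<union> (if even n then {} else {0})"
  define f where "f j = (if j = 0 then diag z else \<theta> j)" for j
  define A where "A j = (if j = 0 then (l2_norm z)^2 else (l2_norm (\<theta> j))^2)" for j
  have finJ: "finite J" by (simp add: J_def ND_props)
  have Jodd: "J = insert 0 (ND n)" if "odd n" using that by (auto simp: J_def)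
  have Jeven: "J = ND n" if "even n" using that by (auto simp: J_def)
  have prodND: "(\<Prod>j\<in>ND n. f j (kf n j g)) = (\<Prod>j\<in>{j\<in>{1..<n}. odd (n - j)}. \<theta> j (g j, g (Suc j)))" for g
    unfolding ND_def by (rule prod.cong) (auto simp: f_def kf_def)
  have Fdef: "uvec n \<theta> z g = (if g \<in> extensional {1..n} then \<Prod>j\<in>J. f j (kf n j g) else 0)" for g
  proof (cases "even n")
    case True then show ?thesis by (simp add: uvec_def Jeven prodND)
  next
    case False
    then have "(\<Prod>j\<in>J. f j (kf n j g)) = f 0 (kf n 0 g) * (\<Prod>j\<in>ND n. f j (kf n j g))"
      by (simp add: Jodd ND_props)
    also have "f 0 (kf n 0 g) = z (g 1)" by (simp add: f_def kf_def diag_apply)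
    finally show ?thesis using False by (simp add: uvec_def prodND mult.commute)
  qed
  have fb: "(\<Sum>t\<in>T. (cmod (f j t))^2) \<le> A j" if "j \<in> J" "finite T" for j T
  proof (cases "j = 0")
    case True then show ?thesis using diag_bound[OF z that(2)] by (simp add: f_def A_def)
  next
    case False
    then have "j \<in> ND n" using that(1) by (auto simp: J_def split: if_splits)
    then have "\<theta> j \<in> l2 (I j \<times> I (Suc j))" using vf_l2[OF vf] ND_props(4) by blast
    then show ?thesis using finite_le_norm2 that(2) False by (simp add: f_def A_def)
  qed
  have inj: "g1 = g2" if g: "g1 \<in> extensional {1..n}" "g2 \<in> extensional {1..n}"
    and k: "\<forall>j\<in>J. kf n j g1 = kf n j g2" for g1 g2
  proof (rule extensionalityI[OF g])
    fix i assume "i \<in> {1..n}"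
    then obtain j where j: "((1 \<le> j \<and> j < n \<and> odd (n - j)) \<or> (odd n \<and> j = 0))"
      "((j = 0 \<and> i = 1) \<or> (1 \<le> j \<and> j < n \<and> (i = j \<or> i = Suc j)))"
      using cov_u[OF n2, of i] by auto
    have "j \<in> J" using j(1) by (auto simp: J_def ND_def)
    then have e: "kf n j g1 = kf n j g2" using k by blast
    show "g1 i = g2 i"
    proof (cases "j = 0")
      case True then show ?thesis using e j(2) by (simp add: kf_def)
    next
      case False then show ?thesis using e j(2) by (auto simp: kf_def)
    qed
  qed
  have supp: "\<exists>j\<in>J. f j (kf n j g) = 0" if g: "g \<in> extensional {1..n}" "g \<notin> Htot n I" for g
  proof -
    obtain i where i: "1 \<le> i" "i \<le> n" "g i \<notin> I i" using not_Htot[OF g] by blast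
    then obtain j where j: "((1 \<le> j \<and> j < n \<and> odd (n - j)) \<or> (odd n \<and> j = 0))"
      "((j = 0 \<and> i = 1) \<or> (1 \<le> j \<and> j < n \<and> (i = j \<or> i = Suc j)))"
      using cov_u[OF n2, of i] by auto
    have jJ: "j \<in> J" using j(1) by (auto simp: J_def ND_def)
    show ?thesis
    proof (cases "j = 0")
      case True
      then have "f j (kf n j g) = z (g 1)" by (simp add: f_def kf_def diag_apply)
      also have "\<dots> = 0" using l2_zero_out[OF z] i j(2) True by auto
      finally show ?thesis using jJ by blast
    next
      case False
      then have jr: "1 \<le> j" "j < n" and ij: "i = j \<or> i = Suc j" using j(2) by auto
      then have "\<theta> j \<in> l2 (I j \<times> I (Suc j))" using vf_l2[OF vf] by blast
      moreover have "(g j, g (Suc j)) \<notin> I j \<times> I (Suc j)" using ij i(3) by auto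
      ultimately have "\<theta> j (g j, g (Suc j)) = 0" by (rule l2_zero_out)
      then have "f j (kf n j g) = 0" using False jr by (simp add: f_def kf_mid)
      then show ?thesis using jJ by blast
    qed
  qed
  have main: "uvec n \<theta> z \<in> l2 (Htot n I) \<and> (l2_norm (uvec n \<theta> z))^2 \<le> (\<Prod>j\<in>J. A j)"
    by (rule tensor_l2[where F="uvec n \<theta> z" and f=f and key="kf n" and J=J and A=A and n=n and I=I,
          OF finJ Fdef fb inj supp])
  have pA: "(\<Prod>j\<in>ND n. A j) = (\<Prod>j\<in>ND n. (l2_norm (\<theta> j))^2)"
    by (rule prod.cong) (auto simp: A_def ND_props)
  have "(\<Prod>j\<in>J. A j) = (\<Prod>j\<in>ND n. (l2_norm (\<theta> j))^2) * (if even n then 1 else (l2_norm z)^2)"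
  proof (cases "even n")
    case True then show ?thesis by (simp add: Jeven pA)
  next
    case False
    have "A 0 = (l2_norm z)^2" by (simp add: A_def)
    then show ?thesis using False by (simp add: Jodd ND_props pA mult.commute)
  qed
  then show ?thesis using main by simp
qed

lemma wvec_l2:
  assumes n2: "2 \<le> n" and vf: "valid_factors n I \<theta>" and x: "x \<in> l2 (I 1)" and y: "y \<in> l2 (I n)"
  shows "wvec n \<theta> x y \<in> l2 (Htot n I) \<and>
    (l2_norm (wvec n \<theta> x y))^2 \<le> (\<Prod>j\<in>DD n. (l2_norm (\<theta> j))^2) * (if even n then (l2_norm x)^2 else 1) * (l2_norm y)^2"
proof -
  define J0 where "J0 = DD n \<union> (if even n then {0} else {})"
  define J where "J = insert n J0"
  define f where "f j = (if j = 0 then diag x else if j = n then diag y else (\<lambda>t. cnj (\<theta> j t)))" for j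
  define A where "A j = (if j = 0 then (l2_norm x)^2 else if j = n then (l2_norm y)^2 else (l2_norm (\<theta> j))^2)" for j
  have n0: "n \<noteq> 0" using n2 by simp
  have finJ0: "finite J0" by (simp add: J0_def DD_props)
  have finJ: "finite J" by (simp add: J_def finJ0)
  have nJ0: "n \<notin> J0" using n0 by (auto simp: J0_def DD_props)
  have J0even: "J0 = insert 0 (DD n)" if "even n" using that by (auto simp: J0_def)
  have J0odd: "J0 = DD n" if "odd n" using that by (auto simp: J0_def)
  have prodDD: "(\<Prod>j\<in>DD n. f j (kf n j g)) = (\<Prod>j\<in>{j\<in>{1..<n}. even (n - j)}. cnj (\<theta> j (g j, g (Suc j))))" for g
    unfolding DD_def by (rule prod.cong) (auto simp: f_def kf_def)
  have fn: "f n (kf n n g) = y (g n)" for g using n0 by (simp add: f_def kf_def diag_apply)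
  have f0: "f 0 (kf n 0 g) = x (g 1)" for g by (simp add: f_def kf_def diag_apply)
  have Fdef: "wvec n \<theta> x y g = (if g \<in> extensional {1..n} then \<Prod>j\<in>J. f j (kf n j g) else 0)" for g
  proof -
    have pJ: "(\<Prod>j\<in>J. f j (kf n j g)) = y (g n) * (\<Prod>j\<in>J0. f j (kf n j g))"
      by (simp add: J_def finJ0 nJ0 fn)
    show ?thesis
    proof (cases "even n")
      case True
      then have "(\<Prod>j\<in>J0. f j (kf n j g)) = x (g 1) * (\<Prod>j\<in>DD n. f j (kf n j g))"
        by (simp add: J0even DD_props f0)
      then show ?thesis using True by (simp add: wvec_def pJ prodDD mult_ac)
    next
      case False
      then show ?thesis by (simp add: wvec_def pJ J0odd prodDD mult_ac)
    qed
  qed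
  have fb: "(\<Sum>t\<in>T. (cmod (f j t))^2) \<le> A j" if "j \<in> J" "finite T" for j T
  proof (cases "j = 0")
    case True then show ?thesis using diag_bound[OF x that(2)] by (simp add: f_def A_def)
  next
    case F0: False
    show ?thesis
    proof (cases "j = n")
      case True then show ?thesis using diag_bound[OF y that(2)] n0 by (simp add: f_def A_def)
    next
      case False
      then have "j \<in> DD n" using that(1) F0 by (auto simp: J_def J0_def split: if_splits)
      then have "\<theta> j \<in> l2 (I j \<times> I (Suc j))" using vf_l2[OF vf] DD_props(4) by blast
      then show ?thesis using finite_le_norm2 that(2) False F0 by (simp add: f_def A_def)
    qed
  qed
  have inj: "g1 = g2" if g: "g1 \<in> extensional {1..n}" "g2 \<in> extensional {1..n}"
    and k: "\<forall>j\<in>J. kf n j g1 = kf n j g2" for g1 g2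
  proof (rule extensionalityI[OF g])
    fix i assume "i \<in> {1..n}"
    then obtain j where j: "((1 \<le> j \<and> j < n \<and> even (n - j)) \<or> (even n \<and> j = 0) \<or> j = n)"
      "((j = 0 \<and> i = 1) \<or> (j = n \<and> i = n) \<or> (1 \<le> j \<and> j < n \<and> (i = j \<or> i = Suc j)))"
      using cov_w[OF n2, of i] by auto
    have "j \<in> J" using j(1) by (auto simp: J_def J0_def DD_def)
    then have e: "kf n j g1 = kf n j g2" using k by blast
    show "g1 i = g2 i" using e j(2) n0 by (auto simp: kf_def split: if_splits)
  qed
  have supp: "\<exists>j\<in>J. f j (kf n j g) = 0" if g: "g \<in> extensional {1..n}" "g \<notin> Htot n I" for g
  proof -
    obtain i where i: "1 \<le> i" "i \<le> n" "g i \<notin> I i" using not_Htot[OF g] by blast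
    then obtain j where j: "((1 \<le> j \<and> j < n \<and> even (n - j)) \<or> (even n \<and> j = 0) \<or> j = n)"
      "((j = 0 \<and> i = 1) \<or> (j = n \<and> i = n) \<or> (1 \<le> j \<and> j < n \<and> (i = j \<or> i = Suc j)))"
      using cov_w[OF n2, of i] by auto
    have jJ: "j \<in> J" using j(1) by (auto simp: J_def J0_def DD_def)
    show ?thesis
    proof (cases "j = 0")
      case True
      then have "f j (kf n j g) = x (g 1)" by (simp add: f0)
      also have "\<dots> = 0" using l2_zero_out[OF x] i j(2) True n0 by auto
      finally show ?thesis using jJ by blast
    next
      case F0: False
      show ?thesis
      proof (cases "j = n")
        case True
        then have "f j (kf n j g) = y (g n)" by (simp add: fn)
        also have "\<dots> = 0" using l2_zero_out[OF y] i j(2) True n0 by auto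
        finally show ?thesis using jJ by blast
      next
        case False
        then have jr: "1 \<le> j" "j < n" and ij: "i = j \<or> i = Suc j" using j(2) F0 by auto
        then have "\<theta> j \<in> l2 (I j \<times> I (Suc j))" using vf_l2[OF vf] by blast
        moreover have "(g j, g (Suc j)) \<notin> I j \<times> I (Suc j)" using ij i(3) by auto
        ultimately have "\<theta> j (g j, g (Suc j)) = 0" by (rule l2_zero_out)
        then have "f j (kf n j g) = 0" using F0 False jr by (simp add: f_def kf_mid)
        then show ?thesis using jJ by blast
      qed
    qed
  qed
  have main: "wvec n \<theta> x y \<in> l2 (Htot n I) \<and> (l2_norm (wvec n \<theta> x y))^2 \<le> (\<Prod>j\<in>J. A j)"
    by (rule tensor_l2[where F="wvec n \<theta> x y" and f=f and key="kf n" and J=J and A=A and n=n and I=I,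
          OF finJ Fdef fb inj supp])
  have pA: "(\<Prod>j\<in>DD n. A j) = (\<Prod>j\<in>DD n. (l2_norm (\<theta> j))^2)"
    by (rule prod.cong) (auto simp: A_def DD_props)
  have An: "A n = (l2_norm y)^2" using n0 by (simp add: A_def)
  have A0: "A 0 = (l2_norm x)^2" by (simp add: A_def)
  have "(\<Prod>j\<in>J. A j) = (\<Prod>j\<in>DD n. (l2_norm (\<theta> j))^2) * (if even n then (l2_norm x)^2 else 1) * (l2_norm y)^2"
  proof -
    have s1: "(\<Prod>j\<in>J. A j) = A n * (\<Prod>j\<in>J0. A j)" by (simp add: J_def finJ0 nJ0)
    show ?thesis
    proof (cases "even n")
      case True
      then have "(\<Prod>j\<in>J0. A j) = A 0 * (\<Prod>j\<in>DD n. A j)" by (simp add: J0even DD_props)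
      then show ?thesis using True by (simp add: s1 pA An A0 mult_ac)
    next
      case False then show ?thesis by (simp add: s1 J0odd pA An mult_ac)
    qed
  qed
  then show ?thesis using main by simp
qed

lemma infsum_finite_sum:
  fixes f :: "'k \<Rightarrow> 'x \<Rightarrow> complex"
  assumes "finite K" "\<And>k. k \<in> K \<Longrightarrow> f k summable_on A"
  shows "(\<lambda>x. \<Sum>k\<in>K. f k x) summable_on A \<and> infsum (\<lambda>x. \<Sum>k\<in>K. f k x) A = (\<Sum>k\<in>K. infsum (f k) A)"
  using assms
proof (induction K rule: finite_induct)
  case empty then show ?case by simp
next
  case (insert k K)
  then have IH: "(\<lambda>x. \<Sum>k\<in>K. f k x) summable_on A" "infsum (\<lambda>x. \<Sum>k\<in>K. f k x) A = (\<Sum>k\<in>K. infsum (f k) A)"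
    and fk: "f k summable_on A" by auto
  show ?case using insert(1,2) IH fk by (simp add: summable_on_add infsum_add)
qed

lemma wvec_odd: assumes "odd n" shows "wvec n \<theta> x y = wvec n \<theta> x' y"
proof
  fix g show "wvec n \<theta> x y g = wvec n \<theta> x' y g" using assms by (simp add: wvec_def)
qed

lemma delta_l2: "b \<in> K \<Longrightarrow> delta b \<in> l2 K"
proof -
  assume b: "b \<in> K"
  have "(\<Sum>t\<in>T. (cmod (delta b t))^2) \<le> 1" if "finite T" for T
  proof -
    have "(\<Sum>t\<in>T. (cmod (delta b t))^2) = (\<Sum>t\<in>T. if b = t then 1 else 0)"
      by (rule sum.cong) (auto simp: delta_def)
    also have "\<dots> \<le> 1" using that by simp
    finally show ?thesis .
  qed
  then have "(\<lambda>t. (cmod (delta b t))^2) summable_on UNIV" by (rule norm2_le)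
  then show ?thesis using b by (auto simp: l2_def delta_def)
qed

lemma Selem_eq:
  "Selem n I \<phi> \<theta> z b = (if b \<in> I n then l2_inner (\<phi> (uvec n \<theta> z)) (wvec n \<theta> (cnj \<circ> z) (delta b)) else 0)"
  by (cases "even n") (auto simp: Selem_def wvec_odd[of n \<theta> z _ "cnj \<circ> z"])

lemma prod_ND_DD:
  "(\<Prod>j\<in>ND n. (l2_norm (\<theta> j))^2) * (\<Prod>j\<in>DD n. (l2_norm (\<theta> j))^2) = (\<Prod>j\<in>{1..<n}. l2_norm (\<theta> j))^2"
proof -
  have "{1..<n} = ND n \<union> DD n" by (auto simp: ND_def DD_def)
  moreover have "ND n \<inter> DD n = {}" by (auto simp: ND_def DD_def)
  ultimately have "(\<Prod>j\<in>{1..<n}. (l2_norm (\<theta> j))^2) = (\<Prod>j\<in>ND n. (l2_norm (\<theta> j))^2) * (\<Prod>j\<in>DD n. (l2_norm (\<theta> j))^2)"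
    by (simp add: prod.union_disjoint ND_props DD_props)
  then show ?thesis by (simp add: prod_power_distrib)
qed

lemma l2_norm_cnj: "l2_norm (cnj \<circ> z) = l2_norm z"
  by (simp add: l2_norm_def o_def)

lemma selem_bound:
  assumes n2: "2 \<le> n" and bop: "bounded_op (Htot n I) (Htot n I) \<phi>" and vf: "valid_factors n I \<theta>"
    and z: "z \<in> l2 (I 1)" and finF: "finite F"
  shows "L2_set (\<lambda>b. cmod (Selem n I \<phi> \<theta> z b)) F \<le> op_norm (Htot n I) \<phi> * (\<Prod>j\<in>{1..<n}. l2_norm (\<theta> j)) * l2_norm z"
proof -
  let ?N = "Htot n I"
  define M where "M = op_norm ?N \<phi>"
  define P where "P = (\<Prod>j\<in>{1..<n}. l2_norm (\<theta> j))"
  define u where "u = uvec n \<theta> z"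
  define v where "v = \<phi> u"
  define x where "x = cnj \<circ> z"
  define F' where "F' = F \<inter> I n"
  define c where "c b = Selem n I \<phi> \<theta> z b" for b
  define wb where "wb b = wvec n \<theta> x (delta b)" for b
  define y where "y s = (\<Sum>b\<in>F'. c b * delta b s)" for s
  define W where "W = wvec n \<theta> x y"
  define Q where "Q = (\<Sum>b\<in>F'. (cmod (c b))^2)"
  have finF': "finite F'" using finF by (simp add: F'_def)
  have M0: "M \<ge> 0" unfolding M_def by (rule op_norm_nonneg[OF bop])
  have P0: "P \<ge> 0" unfolding P_def by (simp add: prod_nonneg l2_norm_nonneg)
  have Q0: "Q \<ge> 0" unfolding Q_def by (simp add: sum_nonneg)
  have x: "x \<in> l2 (I 1)" unfolding x_def by (rule l2_cnj[OF z])
  have nx: "l2_norm x = l2_norm z" unfolding x_def by (rule l2_norm_cnj)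
  have uL: "u \<in> l2 ?N" and nu: "(l2_norm u)^2 \<le> (\<Prod>j\<in>ND n. (l2_norm (\<theta> j))^2) * (if even n then 1 else (l2_norm z)^2)"
    using uvec_l2[OF n2 vf z] unfolding u_def by auto
  have vL: "v \<in> l2 ?N" unfolding v_def using bop uL by (simp add: bounded_op_def)
  have nv: "l2_norm v \<le> M * l2_norm u" unfolding v_def M_def by (rule op_norm_bound[OF bop uL])
  have y_eq: "y s = (if s \<in> F' then c s else 0)" for s
  proof -
    have "y s = (\<Sum>b\<in>F'. if s = b then c b else 0)"
      unfolding y_def by (rule sum.cong) (auto simp: delta_def)
    then show ?thesis using finF' by simp
  qed
  have yb: "(\<Sum>s\<in>T. (cmod (y s))^2) \<le> Q" if "finite T" for T
  proof -
    have "(\<Sum>s\<in>T. (cmod (y s))^2) = (\<Sum>s\<in>T \<inter> F'. (cmod (c s))^2)"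
      by (rule sum.mono_neutral_cong_right) (auto simp: that y_eq)
    also have "\<dots> \<le> Q" unfolding Q_def by (rule sum_mono2) (auto simp: finF')
    finally show ?thesis .
  qed
  have yL: "y \<in> l2 (I n)"
    using norm2_le(1)[of y, OF yb] y_eq by (auto simp: l2_def F'_def)
  have ny: "(l2_norm y)^2 \<le> Q" by (rule norm2_le(2)[of y, OF yb])
  have WL: "W \<in> l2 ?N" and nW: "(l2_norm W)^2 \<le> (\<Prod>j\<in>DD n. (l2_norm (\<theta> j))^2) * (if even n then (l2_norm x)^2 else 1) * (l2_norm y)^2"
    using wvec_l2[OF n2 vf x yL] unfolding W_def by auto
  have wbL: "wb b \<in> l2 ?N" if "b \<in> F'" for b
    using wvec_l2[OF n2 vf x delta_l2] that unfolding wb_def F'_def by auto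
  have cb: "c b = l2_inner v (wb b)" if "b \<in> F'" for b
    using that unfolding c_def Selem_eq wb_def v_def u_def x_def F'_def by simp
  have W_eq: "W h = (\<Sum>b\<in>F'. c b * wb b h)" for h
  proof (cases "h \<in> extensional {1..n}")
    case True
    define R where "R = (\<Prod>j\<in>{j\<in>{1..<n}. even (n - j)}. cnj (\<theta> j (h j, h (Suc j)))) * (if even n then x (h 1) else 1)"
    have "W h = R * y (h n)" using True by (simp add: W_def wvec_def R_def)
    also have "\<dots> = (\<Sum>b\<in>F'. c b * (R * delta b (h n)))" by (simp add: y_def sum_distrib_left mult_ac)
    also have "\<dots> = (\<Sum>b\<in>F'. c b * wb b h)" using True by (simp add: wb_def wvec_def R_def)
    finally show ?thesis .
  next
    case False then show ?thesis by (simp add: W_def wb_def wvec_def)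
  qed
  have "l2_inner v W = infsum (\<lambda>h. \<Sum>b\<in>F'. cnj (c b) * (v h * cnj (wb b h))) UNIV"
    unfolding l2_inner_def W_eq by (simp add: sum_distrib_left mult_ac)
  also have "\<dots> = (\<Sum>b\<in>F'. infsum (\<lambda>h. cnj (c b) * (v h * cnj (wb b h))) UNIV)"
  proof -
    have S: "(\<lambda>h. cnj (c b) * (v h * cnj (wb b h))) summable_on UNIV" if "b \<in> F'" for b
      by (rule summable_on_cmult_right[OF l2_inner_summable[OF vL wbL[OF that]]])
    show ?thesis
      using infsum_finite_sum[where f="\<lambda>b h. cnj (c b) * (v h * cnj (wb b h))" and A=UNIV and K=F', OF finF' S]
      by simp
  qed
  also have "\<dots> = (\<Sum>b\<in>F'. cnj (c b) * c b)"
    by (rule sum.cong) (simp_all add: infsum_cmult_right' cb l2_inner_def)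
  also have "\<dots> = (\<Sum>b\<in>F'. complex_of_real ((cmod (c b))^2))"
    by (rule sum.cong[OF refl]) (metis complex_norm_square mult.commute)
  also have "\<dots> = of_real Q"
    unfolding Q_def by (rule of_real_sum[symmetric])
  finally have inner: "l2_inner v W = of_real Q" .
  have "Q = cmod (l2_inner v W)" using inner Q0 by simp
  also have "\<dots> \<le> l2_norm v * l2_norm W" by (rule cauchy_schwarz[OF vL WL])
  also have "\<dots> \<le> M * l2_norm u * l2_norm W" by (rule mult_right_mono[OF nv l2_norm_nonneg])
  also have "\<dots> \<le> M * (P * l2_norm z * sqrt Q)"
  proof -
    have "(l2_norm u * l2_norm W)^2 = (l2_norm u)^2 * (l2_norm W)^2" by (simp add: power_mult_distrib)
    also have "\<dots> \<le> ((\<Prod>j\<in>ND n. (l2_norm (\<theta> j))^2) * (if even n then 1 else (l2_norm z)^2)) *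
        ((\<Prod>j\<in>DD n. (l2_norm (\<theta> j))^2) * (if even n then (l2_norm x)^2 else 1) * (l2_norm y)^2)"
      by (rule mult_mono[OF nu nW]) (simp_all add: prod_nonneg)
    also have "\<dots> = P^2 * (l2_norm z)^2 * (l2_norm y)^2"
      unfolding P_def prod_ND_DD[symmetric] nx by (cases "even n") (simp_all add: mult_ac)
    also have "\<dots> \<le> P^2 * (l2_norm z)^2 * Q" by (rule mult_left_mono[OF ny]) simp
    also have "\<dots> = (P * l2_norm z * sqrt Q)^2" using Q0 by (simp add: power_mult_distrib)
    finally have "(l2_norm u * l2_norm W)^2 \<le> (P * l2_norm z * sqrt Q)^2" .
    then have "l2_norm u * l2_norm W \<le> P * l2_norm z * sqrt Q"
      by (rule power2_le_imp_le) (simp add: P0 l2_norm_nonneg Q0)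
    then show ?thesis using M0 by (simp add: mult.assoc mult_left_mono)
  qed
  finally have QK: "Q \<le> (M * P * l2_norm z) * sqrt Q" by (simp add: mult_ac)
  have K0: "M * P * l2_norm z \<ge> 0" using M0 P0 l2_norm_nonneg[of z] by simp
  have sQ: "sqrt Q \<le> M * P * l2_norm z"
  proof (cases "Q = 0")
    case True then show ?thesis using K0 by simp
  next
    case False
    then have pos: "sqrt Q > 0" using Q0 by simp
    have e: "sqrt Q * sqrt Q = Q" using Q0 by simp
    have "sqrt Q * sqrt Q \<le> (M * P * l2_norm z) * sqrt Q" using QK e by linarith
    then show ?thesis using pos by (rule mult_right_le_imp_le)
  qed
  have "(\<Sum>b\<in>F. (cmod (Selem n I \<phi> \<theta> z b))^2) = Q"
    unfolding Q_def F'_def c_def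
    by (rule sum.mono_neutral_right) (auto simp: finF Selem_def)
  then show ?thesis using sQ unfolding L2_set_def M_def P_def by simp
qed

definition mix :: "nat \<Rightarrow> (nat \<Rightarrow> 'a) \<Rightarrow> (nat \<Rightarrow> 'a) \<Rightarrow> nat \<Rightarrow> 'a \<times> 'a" where
  "mix n g h = (\<lambda>j. if odd (n - j) then (g j, g (Suc j)) else (h j, h (Suc j)))"

definition Zf :: "nat \<Rightarrow> ('a \<Rightarrow> complex) \<Rightarrow> 'a \<Rightarrow> (nat \<Rightarrow> 'a) \<Rightarrow> (nat \<Rightarrow> 'a) \<Rightarrow> complex" where
  "Zf n z b g h = (if even n then 1 else z (g 1)) * (if even n then z (h 1) else 1) * cnj (delta b (h n))"

lemma uv_ident:
  "uvec n \<theta> z g * cnj (wvec n \<theta> (cnj \<circ> z) (delta b) h) =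
    (if g \<in> extensional {1..n} \<and> h \<in> extensional {1..n} then gtensor n \<theta> (mix n g h) * Zf n z b g h else 0)"
proof (cases "g \<in> extensional {1..n} \<and> h \<in> extensional {1..n}")
  case True
  have "gtensor n \<theta> (mix n g h) =
      (\<Prod>j\<in>{j\<in>{1..<n}. odd (n - j)}. \<theta> j (g j, g (Suc j))) * (\<Prod>j\<in>{j\<in>{1..<n}. even (n - j)}. \<theta> j (h j, h (Suc j)))"
  proof -
    have "gtensor n \<theta> (mix n g h) = (\<Prod>j\<in>{1..<n}. if odd (n - j) then \<theta> j (g j, g (Suc j)) else \<theta> j (h j, h (Suc j)))"
      unfolding gtensor_def mix_def by (rule prod.cong) auto
    also have "\<dots> = (\<Prod>j\<in>{1..<n} \<inter> {j. odd (n - j)}. \<theta> j (g j, g (Suc j))) * (\<Prod>j\<in>{1..<n} \<inter> - {j. odd (n - j)}. \<theta> j (h j, h (Suc j)))"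
      by (rule prod.If_cases) simp
    also have "{1..<n} \<inter> {j. odd (n - j)} = {j\<in>{1..<n}. odd (n - j)}" by auto
    also have "{1..<n} \<inter> - {j. odd (n - j)} = {j\<in>{1..<n}. even (n - j)}" by auto
    finally show ?thesis .
  qed
  then show ?thesis using True by (simp add: uvec_def wvec_def Zf_def mult_ac)
next
  case False
  then show ?thesis by (auto simp: uvec_def wvec_def)
qed

lemma uv_sum:
  assumes "(m, \<Theta>) \<in> reps n I \<zeta>"
  shows "(\<Sum>k<m. uvec n (\<Theta> k) z g * cnj (wvec n (\<Theta> k) (cnj \<circ> z) (delta b) h)) =
    (if g \<in> extensional {1..n} \<and> h \<in> extensional {1..n} then \<zeta> (mix n g h) * Zf n z b g h else 0)"
proof -
  have z: "\<zeta> = (\<lambda>g. \<Sum>k<m. gtensor n (\<Theta> k) g)" using assms by (simp add: reps_def)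
  show ?thesis
  proof (cases "g \<in> extensional {1..n} \<and> h \<in> extensional {1..n}")
    case True then show ?thesis unfolding uv_ident z by (simp add: sum_distrib_right)
  next
    case False then show ?thesis unfolding uv_ident by (simp only: if_not_P[OF False] if_False sum.neutral_const)
  qed
qed

lemma L2_set_sum_le: fixes m :: nat shows "L2_set (\<lambda>b. \<Sum>k<m. h k b) F \<le> (\<Sum>k<m. L2_set (h k) F)"
proof (induction m)
  case 0 then show ?case by (simp add: L2_set_0')
next
  case (Suc m)
  have "L2_set (\<lambda>b. \<Sum>k<Suc m. h k b) F = L2_set (\<lambda>b. (\<Sum>k<m. h k b) + h m b) F" by simp
  also have "\<dots> \<le> L2_set (\<lambda>b. \<Sum>k<m. h k b) F + L2_set (h m) F" by (rule L2_set_triangle_ineq)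
  also have "\<dots> \<le> (\<Sum>k<Suc m. L2_set (h k) F)" using Suc.IH by simp
  finally show ?case .
qed

lemma wd:
  assumes n2: "2 \<le> n" and bop: "bounded_op (Htot n I) (Htot n I) \<phi>"
    and r1: "(m, \<Theta>) \<in> reps n I \<zeta>" and r2: "(m', \<Theta>') \<in> reps n I \<zeta>" and z: "z \<in> l2 (I 1)"
  shows "(\<Sum>k<m. Selem n I \<phi> (\<Theta> k) z b) = (\<Sum>k<m'. Selem n I \<phi> (\<Theta>' k) z b)"
proof (cases "b \<in> I n")
  case False then show ?thesis by (simp add: Selem_def)
next
  case True
  let ?L = "l2 (Htot n I)"
  define B0 where "B0 u v = infsum (\<lambda>h. \<phi> u h * v h) UNIV" for u v
  have lin: "\<forall>f\<in>?L. \<forall>g\<in>?L. \<forall>a b. \<phi> (\<lambda>x. a * f x + b * g x) = (\<lambda>y. a * \<phi> f y + b * \<phi> g y)"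
    and img: "\<forall>f\<in>?L. \<phi> f \<in> ?L" using bop by (auto simp: bounded_op_def)
  have P0: "(\<lambda>_. 0) \<in> ?L" by (rule l2_zero)
  have Pc: "(\<lambda>x. a * u1 x + b * u2 x) \<in> ?L" if "u1 \<in> ?L" "u2 \<in> ?L" for u1 u2 a b
    using that by (rule l2_lincomb)
  have B1: "B0 (\<lambda>x. a * u1 x + b * u2 x) v = a * B0 u1 v + b * B0 u2 v"
    if h: "u1 \<in> ?L" "u2 \<in> ?L" "v \<in> ?L" for u1 u2 v a b
  proof -
    have s1: "(\<lambda>h. \<phi> u1 h * v h) summable_on UNIV" by (rule l2_prod_summable[OF img[rule_format, OF h(1)] h(3)])
    have s2: "(\<lambda>h. \<phi> u2 h * v h) summable_on UNIV" by (rule l2_prod_summable[OF img[rule_format, OF h(2)] h(3)])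
    have "B0 (\<lambda>x. a * u1 x + b * u2 x) v = infsum (\<lambda>h. a * (\<phi> u1 h * v h) + b * (\<phi> u2 h * v h)) UNIV"
      unfolding B0_def lin[rule_format, OF h(1) h(2)] by (simp add: algebra_simps)
    also have "\<dots> = a * B0 u1 v + b * B0 u2 v"
      unfolding B0_def
      by (simp add: infsum_add summable_on_cmult_right[OF s1] summable_on_cmult_right[OF s2] infsum_cmult_right')
    finally show ?thesis .
  qed
  have B2: "B0 u (\<lambda>x. a * v1 x + b * v2 x) = a * B0 u v1 + b * B0 u v2"
    if h: "u \<in> ?L" "v1 \<in> ?L" "v2 \<in> ?L" for u v1 v2 a b
  proof -
    have s1: "(\<lambda>h. \<phi> u h * v1 h) summable_on UNIV" by (rule l2_prod_summable[OF img[rule_format, OF h(1)] h(2)])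
    have s2: "(\<lambda>h. \<phi> u h * v2 h) summable_on UNIV" by (rule l2_prod_summable[OF img[rule_format, OF h(1)] h(3)])
    have "B0 u (\<lambda>x. a * v1 x + b * v2 x) = infsum (\<lambda>h. a * (\<phi> u h * v1 h) + b * (\<phi> u h * v2 h)) UNIV"
      unfolding B0_def by (simp add: algebra_simps)
    also have "\<dots> = a * B0 u v1 + b * B0 u v2"
      unfolding B0_def
      by (simp add: infsum_add summable_on_cmult_right[OF s1] summable_on_cmult_right[OF s2] infsum_cmult_right')
    finally show ?thesis .
  qed
  have x: "cnj \<circ> z \<in> l2 (I 1)" by (rule l2_cnj[OF z])
  have db: "delta b \<in> l2 (I n)" by (rule delta_l2[OF True])
  have uP: "\<forall>k<m. uvec n (\<Theta> k) z \<in> ?L"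
    using r1 uvec_l2[where I=I, OF n2 _ z] by (auto simp: reps_def)
  have vQ: "\<forall>k<m. (\<lambda>h. cnj (wvec n (\<Theta> k) (cnj \<circ> z) (delta b) h)) \<in> ?L"
    using r1 wvec_l2[where I=I, OF n2 _ x db] l2_cnj' by (auto simp: reps_def)
  have uP': "\<forall>k<m'. uvec n (\<Theta>' k) z \<in> ?L"
    using r2 uvec_l2[where I=I, OF n2 _ z] by (auto simp: reps_def)
  have vQ': "\<forall>k<m'. (\<lambda>h. cnj (wvec n (\<Theta>' k) (cnj \<circ> z) (delta b) h)) \<in> ?L"
    using r2 wvec_l2[where I=I, OF n2 _ x db] l2_cnj' by (auto simp: reps_def)
  have H: "(\<Sum>k<m. uvec n (\<Theta> k) z g * (\<lambda>h. cnj (wvec n (\<Theta> k) (cnj \<circ> z) (delta b) h)) h) =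
           (\<Sum>k<m'. uvec n (\<Theta>' k) z g * (\<lambda>h. cnj (wvec n (\<Theta>' k) (cnj \<circ> z) (delta b) h)) h)" for g h
    using uv_sum[OF r1, of z g b h] uv_sum[OF r2, of z g b h] by simp
  have E: "(\<Sum>k<m. B0 (uvec n (\<Theta> k) z) (\<lambda>h. cnj (wvec n (\<Theta> k) (cnj \<circ> z) (delta b) h))) =
           (\<Sum>k<m'. B0 (uvec n (\<Theta>' k) z) (\<lambda>h. cnj (wvec n (\<Theta>' k) (cnj \<circ> z) (delta b) h)))"
    by (rule bilin_sum_eq[where P="?L" and Q="?L" and B=B0, OF P0 Pc Pc B1 B2 uP vQ uP' vQ' H])
  have S: "Selem n I \<phi> \<theta> z b = B0 (uvec n \<theta> z) (\<lambda>h. cnj (wvec n \<theta> (cnj \<circ> z) (delta b) h))" for \<theta>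
    using True by (simp add: Selem_eq l2_inner_def B0_def)
  show ?thesis unfolding S using E .
qed

lemma S_rep_bound:
  assumes n2: "2 \<le> n" and bop: "bounded_op (Htot n I) (Htot n I) \<phi>"
    and r: "(m, \<Theta>) \<in> reps n I \<zeta>" and r0: "(m0, \<Theta>0) \<in> reps n I \<zeta>"
  shows "op_norm (I 1) (\<lambda>z b. \<Sum>k<m0. Selem n I \<phi> (\<Theta>0 k) z b)
     \<le> op_norm (Htot n I) \<phi> * (\<Sum>k<m. \<Prod>j\<in>{1..<n}. l2_norm (\<Theta> k j))"
proof -
  define S where "S = (\<lambda>z b. \<Sum>k<m0. Selem n I \<phi> (\<Theta>0 k) z b)"
  define M where "M = op_norm (Htot n I) \<phi>"
  define P where "P k = (\<Prod>j\<in>{1..<n}. l2_norm (\<Theta> k j))" for k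
  define K where "K = M * (\<Sum>k<m. P k)"
  have M0: "M \<ge> 0" unfolding M_def by (rule op_norm_nonneg[OF bop])
  have P0: "P k \<ge> 0" for k unfolding P_def by (simp add: prod_nonneg l2_norm_nonneg)
  have K0: "K \<ge> 0" unfolding K_def using M0 P0 by (simp add: sum_nonneg)
  have vf: "valid_factors n I (\<Theta> k)" if "k < m" for k using r that by (simp add: reps_def)
  have zb: "l2_norm (S z) \<le> K" if z: "z \<in> l2 (I 1)" "l2_norm z \<le> 1" for z
  proof -
    have Sz: "S z b = (\<Sum>k<m. Selem n I \<phi> (\<Theta> k) z b)" for b
      unfolding S_def using wd[OF n2 bop r0 r z(1)] .
    have fin: "(\<Sum>b\<in>F. (cmod (S z b))^2) \<le> K^2" if fF: "finite F" for F
    proof -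
      have "L2_set (\<lambda>b. cmod (S z b)) F \<le> L2_set (\<lambda>b. \<Sum>k<m. cmod (Selem n I \<phi> (\<Theta> k) z b)) F"
        by (rule L2_set_mono) (simp_all add: Sz norm_sum)
      also have "\<dots> \<le> (\<Sum>k<m. L2_set (\<lambda>b. cmod (Selem n I \<phi> (\<Theta> k) z b)) F)"
        by (rule L2_set_sum_le)
      also have "\<dots> \<le> (\<Sum>k<m. M * P k * l2_norm z)"
        by (rule sum_mono) (use selem_bound[OF n2 bop vf z(1) fF] in \<open>simp add: M_def P_def\<close>)
      also have "\<dots> \<le> (\<Sum>k<m. M * P k)"
      proof (rule sum_mono)
        fix k show "M * P k * l2_norm z \<le> M * P k"
          using mult_left_mono[OF z(2), of "M * P k"] M0 P0[of k] by simp
      qed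
      also have "\<dots> = K" unfolding K_def by (simp add: sum_distrib_left)
      finally have L: "L2_set (\<lambda>b. cmod (S z b)) F \<le> K" .
      have "(L2_set (\<lambda>b. cmod (S z b)) F)^2 \<le> K^2" by (rule power_mono[OF L L2_set_nonneg])
      moreover have "(L2_set (\<lambda>b. cmod (S z b)) F)^2 = (\<Sum>b\<in>F. (cmod (S z b))^2)"
        unfolding L2_set_def by (simp add: sum_nonneg)
      ultimately show ?thesis by simp
    qed
    have "(l2_norm (S z))^2 \<le> K^2" by (rule norm2_le(2)[of "S z", OF fin])
    then show ?thesis by (rule power2_le_imp_le[OF _ K0])
  qed
  define X where "X = {l2_norm (S f) | f. f \<in> l2 (I 1) \<and> l2_norm f \<le> 1}"
  have "(\<lambda>_. 0) \<in> l2 (I 1) \<and> l2_norm (\<lambda>_. 0::complex) \<le> 1" by (simp add: l2_zero l2_norm_def)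
  then have ne: "X \<noteq> {}" unfolding X_def by blast
  have "Sup X \<le> K"
  proof (rule cSup_least[OF ne])
    fix v assume "v \<in> X"
    then obtain f where "v = l2_norm (S f)" "f \<in> l2 (I 1)" "l2_norm f \<le> 1" unfolding X_def by blast
    then show "v \<le> K" using zb by simp
  qed
  then show ?thesis unfolding op_norm_def X_def S_def K_def M_def P_def .
qed

theorem mainTheorem5:
  fixes n :: nat and I :: "nat \<Rightarrow> 'a set"
    and \<phi> :: "((nat \<Rightarrow> 'a) \<Rightarrow> complex) \<Rightarrow> ((nat \<Rightarrow> 'a) \<Rightarrow> complex)"
    and \<zeta> :: "(nat \<Rightarrow> 'a \<times> 'a) \<Rightarrow> complex"
  assumes "n \<ge> 2"
    and "bounded_op (Htot n I) (Htot n I) \<phi>"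
    and "\<zeta> \<in> Gamma n I"
  shows "op_norm (I 1) (S_phi n I \<phi> \<zeta>) \<le> op_norm (Htot n I) \<phi> * proj_norm n I \<zeta>"
proof -
  note n2 = assms(1) and bop = assms(2)
  obtain p where p: "p \<in> reps n I \<zeta>" using assms(3) unfolding Gamma_def by blast
  have ex: "\<exists>T. \<exists>m \<Theta>. (m, \<Theta>) \<in> reps n I \<zeta> \<and> T = (\<lambda>z b. \<Sum>k<m. Selem n I \<phi> (\<Theta> k) z b)"
    using p by (cases p) blast
  obtain m0 \<Theta>0 where r0: "(m0, \<Theta>0) \<in> reps n I \<zeta>"
    and Sdef: "S_phi n I \<phi> \<zeta> = (\<lambda>z b. \<Sum>k<m0. Selem n I \<phi> (\<Theta>0 k) z b)"
    using someI_ex[OF ex] unfolding S_phi_def by blast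
  define M where "M = op_norm (Htot n I) \<phi>"
  define Y where "Y = {\<Sum>k<m. \<Prod>j\<in>{1..<n}. l2_norm (\<Theta> k j) | m \<Theta>. (m, \<Theta>) \<in> reps n I \<zeta>}"
  have M0: "M \<ge> 0" unfolding M_def by (rule op_norm_nonneg[OF bop])
  have bnd: "op_norm (I 1) (S_phi n I \<phi> \<zeta>) \<le> M * y" if "y \<in> Y" for y
  proof -
    from that obtain m \<Theta> where y: "y = (\<Sum>k<m. \<Prod>j\<in>{1..<n}. l2_norm (\<Theta> k j))" and r: "(m, \<Theta>) \<in> reps n I \<zeta>"
      unfolding Y_def by blast
    show ?thesis unfolding Sdef y M_def by (rule S_rep_bound[OF n2 bop r r0])
  qed
  have Yne: "Y \<noteq> {}" using r0 unfolding Y_def by blast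
  have pn: "proj_norm n I \<zeta> = Inf Y" unfolding proj_norm_def Y_def ..
  show ?thesis
  proof (cases "M = 0")
    case True
    obtain y where "y \<in> Y" using Yne by blast
    then have "op_norm (I 1) (S_phi n I \<phi> \<zeta>) \<le> 0" using bnd True by fastforce
    then show ?thesis using True unfolding M_def by simp
  next
    case False
    then have Mp: "M > 0" using M0 by simp
    have "op_norm (I 1) (S_phi n I \<phi> \<zeta>) / M \<le> Inf Y"
    proof (rule cInf_greatest[OF Yne])
      fix y assume "y \<in> Y"
      then have "op_norm (I 1) (S_phi n I \<phi> \<zeta>) \<le> M * y" by (rule bnd)
      then have "op_norm (I 1) (S_phi n I \<phi> \<zeta>) \<le> y * M" by (simp only: mult.commute)
      then show "op_norm (I 1) (S_phi n I \<phi> \<zeta>) / M \<le> y" by (subst pos_divide_le_eq[OF Mp])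
    qed
    then have "op_norm (I 1) (S_phi n I \<phi> \<zeta>) \<le> Inf Y * M" by (subst (asm) pos_divide_le_eq[OF Mp])
    then show ?thesis unfolding pn M_def[symmetric] by (simp only: mult.commute)
  qed
qed

end
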